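(* For Lebesgue almost every $x\in[0,1]$ and for every $i\in\mathbb{N}$, $$\limsup_{n\to\infty}N_i(x,n)<+\infty,$$ i.e. each symbol $i\in\mathbb{N}$ occurs only finitely many times among the $\bar O^1$-symbols of $x$.
   Context: Every irrational $x\in(0,1)$ has a unique representation ($\bar O^1$-expansion) $$x=\sum_{k=1}^\infty\frac{(-1)^{k-1}}{g_1(g_1+g_2)\cdots(g_1+g_2+\dots+g_k)},\qquad g_k=g_k(x)\in\mathbb{N}=\{1,2,3,\dots\}.$$ The $g_k(x)$ are the $\bar O^1$-symbols of $x$, and $N_i(x,n)$ is the number of indices $k\in\{1,\dots,n\}$ with $g_k(x)=i$. *)

theory Defs
  imports "HOL-Analysis.Analysis" "HOL-Library.Liminf_Limsup"
begin

text \<open>Symbol sequences are functions g :: nat => nat indexed from 1; we normalise g 0 = 0.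
  The k-th term of the expansion (k >= 1) is
  (-1)^(k-1) / (g 1 * (g 1 + g 2) * ... * (g 1 + ... + g k)).\<close>

definition ob1_term :: "(nat \<Rightarrow> nat) \<Rightarrow> nat \<Rightarrow> real" where
  "ob1_term g k = (-1) ^ (k - 1) / (\<Prod>j=1..k. real (\<Sum>i=1..j. g i))"

definition ob1_expansion :: "real \<Rightarrow> (nat \<Rightarrow> nat) \<Rightarrow> bool" where
  "ob1_expansion x g \<longleftrightarrow> g 0 = 0 \<and> (\<forall>k\<ge>1. g k \<ge> 1) \<and>
     ((\<lambda>k. ob1_term g (Suc k)) sums x)"

text \<open>The O-bar-1 symbols of x (meaningful for irrational x in (0,1), where the
  expansion exists and is unique).\<close>
definition ob1_symbols :: "real \<Rightarrow> nat \<Rightarrow> nat" where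
  "ob1_symbols x = (THE g. ob1_expansion x g)"

definition ob1_count :: "nat \<Rightarrow> real \<Rightarrow> nat \<Rightarrow> nat" where
  "ob1_count i x n = card {k \<in> {1..n}. ob1_symbols x k = i}"

end

theory Submission
  imports Defs
begin


definition nxt :: "real \<Rightarrow> nat" where "nxt z = nat \<lfloor>1/z\<rfloor>"

fun zs :: "real \<Rightarrow> nat \<Rightarrow> real" where
  "zs x 0 = x"
| "zs x (Suc k) = 1 - real (nxt (zs x k)) * zs x k"

definition cs :: "real \<Rightarrow> nat \<Rightarrow> nat" where "cs x k = nxt (zs x k)"

lemma zs_Suc': "zs x (Suc k) = zs (1 - real (nxt x) * x) k"
  by (induction k) auto

lemma irr_inv: "z \<notin> \<rat> \<Longrightarrow> 1/z \<notin> \<rat>"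
  by (metis Rats_divide Rats_1 divide_divide_eq_right div_by_1 mult_1 ) 

lemma step_props:
  assumes z: "0 < z" "z < 1" "z \<notin> \<rat>"
  shows "nxt z \<ge> 1" "real (nxt z) < 1/z" "1/z < real (nxt z) + 1"
    "0 < 1 - real (nxt z) * z" "1 - real (nxt z) * z < 1 / (real (nxt z) + 1)"
    "1 - real (nxt z) * z \<notin> \<rat>"
proof -
  have iz: "1/z \<notin> \<rat>" using irr_inv z by auto
  have gt1: "1/z > 1" using z by (simp add: field_simps)
  have fl: "real_of_int \<lfloor>1/z\<rfloor> \<le> 1/z" "1/z < real_of_int \<lfloor>1/z\<rfloor> + 1" by linarith+
  have ne: "real_of_int \<lfloor>1/z\<rfloor> \<noteq> 1/z" using iz by (metis Rats_of_int)
  have flp: "\<lfloor>1/z\<rfloor> \<ge> 1" using gt1 by linarith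
  have eq: "real (nxt z) = real_of_int \<lfloor>1/z\<rfloor>" unfolding nxt_def by (rule of_nat_nat) (use flp in linarith)
  show "nxt z \<ge> 1" unfolding nxt_def using flp by linarith
  show lt: "real (nxt z) < 1/z" using fl ne eq by linarith
  show lt2: "1/z < real (nxt z) + 1" using fl eq by linarith
  show "0 < 1 - real (nxt z) * z" using lt z by (simp add: field_simps)
  have h: "1 < z * (real (nxt z) + 1)" using lt2 z by (simp add: field_simps)
  have np: "real (nxt z) > 0" unfolding nxt_def using flp by linarith
  have "real (nxt z) * 1 < real (nxt z) * (z * (real (nxt z) + 1))"
    using mult_strict_left_mono[OF h np] .
  then have "(1 - real (nxt z) * z) * (real (nxt z) + 1) < 1" by (simp add: algebra_simps)
  then show "1 - real (nxt z) * z < 1 / (real (nxt z) + 1)"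
    by (simp add: less_divide_eq add_pos_nonneg)
  show "1 - real (nxt z) * z \<notin> \<rat>"
  proof
    assume h: "1 - real (nxt z) * z \<in> \<rat>"
    have "1 - (1 - real (nxt z) * z) \<in> \<rat>" by (rule Rats_diff[OF Rats_1 h])
    then have "real (nxt z) * z \<in> \<rat>" by simp
    then have "(real (nxt z) * z) / real (nxt z) \<in> \<rat>" by (rule Rats_divide[OF _ Rats_of_nat])
    moreover have "(real (nxt z) * z) / real (nxt z) = z" using np by simp
    ultimately show False using z by simp
  qed
qed

lemma zs_props:
  assumes x: "0 < x" "x < 1" "x \<notin> \<rat>"
  shows "0 < zs x k \<and> zs x k < 1 \<and> zs x k \<notin> \<rat>"
proof (induction k)
  case 0 then show ?case using x by simp
next
  case (Suc k)
  then have p: "0 < zs x k" "zs x k < 1" "zs x k \<notin> \<rat>" by auto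
  have a: "0 < zs x (Suc k)" unfolding zs.simps by (rule step_props(4)[OF p])
  have b: "zs x (Suc k) < 1 / (real (nxt (zs x k)) + 1)" unfolding zs.simps by (rule step_props(5)[OF p])
  have c: "zs x (Suc k) \<notin> \<rat>" unfolding zs.simps by (rule step_props(6)[OF p])
  have "1 / (real (nxt (zs x k)) + 1) \<le> 1" by simp
  then show ?case using a b c by linarith
qed

lemma cs_pos: assumes x: "0 < x" "x < 1" "x \<notin> \<rat>" shows "cs x k \<ge> 1"
  unfolding cs_def using zs_props[OF x, of k] by (intro step_props(1)) auto

lemma cs_mono: assumes x: "0 < x" "x < 1" "x \<notin> \<rat>" shows "cs x k < cs x (Suc k)"
proof -
  let ?z = "zs x k"
  have p: "0 < ?z" "?z < 1" "?z \<notin> \<rat>" using zs_props[OF x, of k] by blast+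
  have a1: "0 < zs x (Suc k)" using step_props(4)[OF p] by (simp only: zs.simps)
  have a2: "zs x (Suc k) < 1 / (real (cs x k) + 1)" using step_props(5)[OF p] by (simp only: zs.simps cs_def)
  have p2: "0 < zs x (Suc k)" "zs x (Suc k) < 1" "zs x (Suc k) \<notin> \<rat>" using zs_props[OF x, of "Suc k"] by blast+
  have cp: "real (cs x k) + 1 > 0" by simp
  have "zs x (Suc k) * (real (cs x k) + 1) < 1" using a2 cp by (simp only: less_divide_eq_1_pos pos_less_divide_eq)
  then have "real (cs x k) + 1 < 1 / zs x (Suc k)" using a1 by (simp only: pos_less_divide_eq mult.commute)
  moreover have "1 / zs x (Suc k) < real (cs x (Suc k)) + 1"
    unfolding cs_def by (rule step_props(3)[OF p2])
  ultimately show ?thesis by linarith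
qed


definition valid :: "(nat \<Rightarrow> nat) \<Rightarrow> bool" where
  "valid c \<longleftrightarrow> (\<forall>j. c j \<ge> 1) \<and> (\<forall>j. c j < c (Suc j))"

definition aa :: "(nat \<Rightarrow> nat) \<Rightarrow> nat \<Rightarrow> real" where
  "aa c k = 1 / (\<Prod>i<Suc k. real (c i))"

lemma valid_ge: "valid c \<Longrightarrow> c j \<ge> Suc j"
proof (induction j)
  case 0 then show ?case by (auto simp: valid_def)
next
  case (Suc j) then show ?case unfolding valid_def by (metis Suc_le_eq le_less_trans not_le)
qed

lemma prod_ge1: "valid c \<Longrightarrow> (\<Prod>i<n. real (c i)) \<ge> 1"
proof (induction n)
  case 0 then show ?case by simp
next
  case (Suc n)
  have "real (c n) \<ge> 1" using Suc.prems by (auto simp: valid_def)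
  then have "1 * 1 \<le> (\<Prod>i<n. real (c i)) * real (c n)"
    using Suc by (intro mult_mono) auto
  then show ?case by simp
qed

lemma prod_ge: "valid c \<Longrightarrow> (\<Prod>i<Suc n. real (c i)) \<ge> real (Suc n)"
proof -
  assume v: "valid c"
  have "(\<Prod>i<Suc n. real (c i)) = (\<Prod>i<n. real (c i)) * real (c n)" by simp
  also have "\<dots> \<ge> 1 * real (Suc n)"
    using prod_ge1[OF v, of n] valid_ge[OF v, of n] by (intro mult_mono) auto
  finally show ?thesis by simp
qed

lemma aa_pos: "valid c \<Longrightarrow> aa c k > 0"
  unfolding aa_def using prod_ge1[of c "Suc k"] by simp

lemma aa_le: "valid c \<Longrightarrow> aa c k \<le> 1 / real (Suc k)"
  unfolding aa_def using prod_ge[of c k] by (simp add: frac_le)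

lemma aa_Suc: "aa c (Suc k) = aa c k / real (c (Suc k))"
  unfolding aa_def by simp

lemma aa_dec: "valid c \<Longrightarrow> aa c (Suc k) < aa c k"
proof -
  assume v: "valid c"
  have "real (c (Suc k)) \<ge> 2" using valid_ge[OF v, of "Suc k"] by simp
  then show ?thesis using aa_pos[OF v, of k] unfolding aa_Suc
    by (simp add: divide_less_eq)
qed

lemma aa_lim: "valid c \<Longrightarrow> aa c \<longlonglongrightarrow> 0"
proof -
  assume v: "valid c"
  have "(\<lambda>k. 1 / real (Suc k)) \<longlonglongrightarrow> 0"
    using LIMSEQ_inverse_real_of_nat by (simp add: inverse_eq_divide)
  moreover have "eventually (\<lambda>k. 0 \<le> aa c k) sequentially"
    by (intro always_eventually allI less_imp_le aa_pos[OF v])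
  moreover have "eventually (\<lambda>k. aa c k \<le> 1 / real (Suc k)) sequentially"
    using aa_le[OF v] by auto
  ultimately show ?thesis
    using tendsto_sandwich[of "\<lambda>_. 0" "aa c" sequentially "\<lambda>k. 1 / real (Suc k)" 0] by auto
qed

lemma leib_bounds:
  assumes v: "valid c" and s: "(\<lambda>k. (-1)^k * aa c k) sums z"
  shows "z < aa c 0" "z > aa c 0 - aa c 1"
proof -
  have L: "\<And>n. (\<Sum>i<2*n. (-1)^i*aa c i) \<le> (\<Sum>i. (-1)^i*aa c i)"
          "\<And>n. (\<Sum>i. (-1)^i*aa c i) \<le> (\<Sum>i<2*n+1. (-1)^i*aa c i)"
    using summable_Leibniz'(2,4)[OF aa_lim[OF v] less_imp_le[OF aa_pos[OF v]] less_imp_le[OF aa_dec[OF v]]]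
    by auto
  have d2: "aa c 2 < aa c 1" using aa_dec[OF v, of 1] by (simp only: Suc_1)
  have s3: "Suc 2 = (3::nat)" by simp
  have d3: "aa c 3 < aa c 2" using aa_dec[OF v, of 2] by (simp only: s3)
  have zz: "z = (\<Sum>i. (-1)^i*aa c i)" using s sums_unique by metis
  have "z \<le> (\<Sum>i<3. (-1)^i*aa c i)" using L(2)[of 1] zz by (simp add: numeral_3_eq_3)
  also have "\<dots> = aa c 0 - aa c 1 + aa c 2" by (simp add: numeral_3_eq_3 numeral_2_eq_2)
  also have "\<dots> < aa c 0" using d2 by simp
  finally show "z < aa c 0" .
  have "aa c 0 - aa c 1 < aa c 0 - aa c 1 + aa c 2 - aa c 3"
    using d3 by simp
  also have "\<dots> = (\<Sum>i<2*2. (-1)^i*aa c i)" by (simp add: numeral_3_eq_3 numeral_2_eq_2)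
  also have "\<dots> \<le> z" using L(1)[of 2] zz by simp
  finally show "z > aa c 0 - aa c 1" .
qed

lemma first_digit:
  assumes v: "valid c" and s: "(\<lambda>k. (-1)^k * aa c k) sums z"
  shows "nxt z = c 0" "z > 0"
proof -
  have n0: "c 0 \<ge> 1" "Suc (c 0) \<le> c 1" using v unfolding valid_def by (auto simp: Suc_le_eq)
  have "real (Suc (c 0)) \<le> real (c 1)" using n0(2) by (simp only: of_nat_le_iff)
  then have c0: "real (c 0) \<ge> 1" "real (c 1) \<ge> real (c 0) + 1" using n0(1) by auto
  have a0: "aa c 0 = 1 / real (c 0)" by (simp add: aa_def)
  have a1: "aa c 1 = 1 / (real (c 0) * real (c 1))" by (simp add: aa_def)
  have "aa c 0 - aa c 1 \<ge> 1 / (real (c 0) + 1)"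
  proof -
    have "aa c 1 \<le> 1 / (real (c 0) * (real (c 0) + 1))" unfolding a1 using c0
      by (intro divide_left_mono mult_left_mono) auto
    moreover have "1 / real (c 0) - 1 / (real (c 0) * (real (c 0) + 1)) = 1 / (real (c 0) + 1)"
    proof -
      have p: "real (c 0) > 0" "real (c 0) + 1 > 0" using c0 by auto
      have "real (c 0) + real (c 0) * real (c 0) > 0" using p(1) by (intro add_pos_pos mult_pos_pos)
      then show ?thesis using p by (simp add: field_simps)
    qed
    ultimately show ?thesis unfolding a0 by linarith
  qed
  then have lo: "z > 1 / (real (c 0) + 1)" using leib_bounds(2)[OF v s] by linarith
  have hi: "z < 1 / real (c 0)" using leib_bounds(1)[OF v s] a0 by simp
  have zp: "z > 0" using lo c0 by (smt (verit) divide_pos_pos)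
  then show "z > 0" .
  have "1/z > real (c 0)" using hi zp c0 by (simp add: field_simps)
  moreover have "1/z < real (c 0) + 1" using lo zp c0 by (simp add: field_simps)
  ultimately have "\<lfloor>1/z\<rfloor> = int (c 0)" by (simp add: floor_eq_iff)
  then show "nxt z = c 0" unfolding nxt_def by simp
qed

lemma tail_sums:
  assumes v: "valid c" and s: "(\<lambda>k. (-1)^k * aa c k) sums z"
  shows "valid (\<lambda>j. c (Suc j))" "(\<lambda>k. (-1)^k * aa (\<lambda>j. c (Suc j)) k) sums (1 - real (c 0) * z)"
proof -
  show "valid (\<lambda>j. c (Suc j))" using v by (auto simp: valid_def)
  have c0: "real (c 0) \<ge> 1" using v by (auto simp: valid_def)
  have e: "(- real (c 0)) * ((-1)^(Suc k) * aa c (Suc k)) = (-1)^k * aa (\<lambda>j. c (Suc j)) k" for k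
    unfolding aa_def using c0 by (subst prod.lessThan_Suc_shift[of _ "Suc k"]) (simp add: field_simps)
  have "(\<lambda>k. (-1)^(Suc k) * aa c (Suc k)) sums (z - aa c 0)"
    using s by (subst sums_Suc_iff) simp
  then have "(\<lambda>k. (- real (c 0)) * ((-1)^(Suc k) * aa c (Suc k))) sums ((- real (c 0)) * (z - aa c 0))"
    by (rule sums_mult)
  moreover have "(- real (c 0)) * (z - aa c 0) = 1 - real (c 0) * z"
    using c0 by (simp add: aa_def field_simps)
  ultimately show "(\<lambda>k. (-1)^k * aa (\<lambda>j. c (Suc j)) k) sums (1 - real (c 0) * z)"
    unfolding e by simp
qed

lemma uniq_digits:
  "valid c \<Longrightarrow> (\<lambda>k. (-1)^k * aa c k) sums z \<Longrightarrow> c k = cs z k"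
proof (induction k arbitrary: c z)
  case 0 then show ?case using first_digit by (simp add: cs_def)
next
  case (Suc k)
  have "(\<lambda>j. c (Suc j)) k = cs (1 - real (c 0) * z) k"
    using Suc.IH tail_sums[OF Suc.prems] by blast
  moreover have "nxt z = c 0" using first_digit[OF Suc.prems] by simp
  ultimately show ?case by (simp add: cs_def zs_Suc' del: zs.simps(2))
qed

lemma cs_valid: assumes x: "0 < x" "x < 1" "x \<notin> \<rat>" shows "valid (cs x)"
  using cs_pos[OF x] cs_mono[OF x] by (auto simp: valid_def)

lemma alg1:
  fixes c P s z :: real assumes c: "c > 0" and P: "P > 0"
  shows "s * z / P = s * (1 / (P * c)) + (- s) * (1 - c * z) / (P * c)"
proof -
  have "s * (1 / (P * c)) + (- s) * (1 - c * z) / (P * c) = (s + (- s) * (1 - c * z)) / (P * c)"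
    by (simp add: add_divide_distrib diff_divide_distrib)
  also have "s + (- s) * (1 - c * z) = (s * z) * c" by (simp add: algebra_simps)
  also have "(s * z) * c / (P * c) = s * z / P" using c by simp
  finally show ?thesis by simp
qed

lemma cs_sums: assumes x: "0 < x" "x < 1" "x \<notin> \<rat>"
  shows "(\<lambda>k. (-1)^k * aa (cs x) k) sums x"
proof -
  let ?P = "\<lambda>n. (\<Prod>i<n. real (cs x i))"
  have v: "valid (cs x)" by (rule cs_valid[OF x])
  have Ppos: "?P n > 0" for n using prod_ge1[OF v, of n] by simp
  have id: "x = (\<Sum>j<n. (-1)^j * aa (cs x) j) + (-1)^n * zs x n / ?P n" for n
  proof (induction n)
    case 0 then show ?case by simp
  next
    case (Suc n)
    have cn: "real (cs x n) > 0" using cs_pos[OF x, of n] by simp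
    have "(-1)^n * zs x n / ?P n = (-1)^n * aa (cs x) n + (-1)^(Suc n) * zs x (Suc n) / ?P (Suc n)"
      using alg1[OF cn Ppos[of n], of "(-1)^n" "zs x n"] by (simp add: aa_def cs_def mult.commute)
    then show ?case using Suc by simp
  qed
  have rem: "(\<lambda>n. (-1)^(Suc n) * zs x (Suc n) / ?P (Suc n)) \<longlonglongrightarrow> 0"
  proof (rule tendsto_norm_zero_cancel)
    have nb: "norm ((-1)^(Suc n) * zs x (Suc n) / ?P (Suc n)) \<le> aa (cs x) n" for n
    proof -
      have "norm ((-1)^(Suc n) * zs x (Suc n) / ?P (Suc n)) = \<bar>zs x (Suc n)\<bar> / \<bar>?P (Suc n)\<bar>"
        by (simp add: abs_mult del: prod.lessThan_Suc zs.simps)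
      also have "\<dots> = zs x (Suc n) / ?P (Suc n)"
        using zs_props[OF x, of "Suc n"] Ppos[of "Suc n"] by (simp del: prod.lessThan_Suc zs.simps)
      also have "\<dots> \<le> 1 / ?P (Suc n)"
        using zs_props[OF x, of "Suc n"] Ppos[of "Suc n"] by (simp add: divide_right_mono del: prod.lessThan_Suc zs.simps)
      finally show ?thesis by (simp add: aa_def del: prod.lessThan_Suc zs.simps)
    qed
    have e1: "eventually (\<lambda>n. (0::real) \<le> norm ((-1)^(Suc n) * zs x (Suc n) / ?P (Suc n))) sequentially"
      by simp
    have e2: "eventually (\<lambda>n. norm ((-1)^(Suc n) * zs x (Suc n) / ?P (Suc n)) \<le> aa (cs x) n) sequentially"
      using nb by simp
    show "(\<lambda>n. norm ((-1)^(Suc n) * zs x (Suc n) / ?P (Suc n))) \<longlonglongrightarrow> 0"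
      by (rule tendsto_sandwich[OF e1 e2 tendsto_const aa_lim[OF v]])
  qed
  have "(\<lambda>n. (\<Sum>j<Suc n. (-1)^j * aa (cs x) j)) \<longlonglongrightarrow> x - 0"
  proof -
    have "(\<lambda>n. x - (-1)^(Suc n) * zs x (Suc n) / ?P (Suc n)) \<longlonglongrightarrow> x - 0"
      by (intro tendsto_intros rem)
    moreover have "x - (-1)^(Suc n) * zs x (Suc n) / ?P (Suc n) = (\<Sum>j<Suc n. (-1)^j * aa (cs x) j)" for n
      using id[of "Suc n"] by linarith
    ultimately show ?thesis by simp
  qed
  then show ?thesis
    by (auto simp: sums_def simp del: sum.lessThan_Suc intro: filterlim_sequentially_Suc[THEN iffD1])
qed



definition gg :: "real \<Rightarrow> nat \<Rightarrow> nat" where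
  "gg x k = (if k = 0 then 0 else cs x (k-1) - (if k = 1 then 0 else cs x (k-2)))"

lemma prod_shift1: "(\<Prod>j=1..Suc k. f j) = (\<Prod>j<Suc k. (f (Suc j) :: real))"
  by (induction k) (auto simp: prod.cl_ivl_Suc)

definition csum :: "(nat \<Rightarrow> nat) \<Rightarrow> nat \<Rightarrow> nat" where
  "csum g j = (\<Sum>i=1..Suc j. g i)"

lemma csum_0: "csum g 0 = g 1" by (simp add: csum_def)
lemma csum_Suc: "csum g (Suc j) = csum g j + g (Suc (Suc j))"
  by (simp add: csum_def)

lemma term_eq: "ob1_term g (Suc k) = (-1)^k * aa (csum g) k"
  unfolding ob1_term_def aa_def csum_def
  by (subst prod_shift1) simp

lemma exp_props:
  assumes e: "ob1_expansion x g"
  shows "valid (csum g)" "(\<lambda>k. (-1)^k * aa (csum g) k) sums x"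
proof -
  have g0: "g 0 = 0" and gp: "\<And>k. k \<ge> 1 \<Longrightarrow> g k \<ge> 1" and s: "(\<lambda>k. ob1_term g (Suc k)) sums x"
    using e unfolding ob1_expansion_def by auto
  have mono: "csum g j < csum g (Suc j)" for j
    using gp[of "Suc (Suc j)"] by (simp add: csum_Suc)
  have pos: "csum g j \<ge> 1" for j
  proof (induction j)
    case 0 then show ?case using gp[of 1] by (simp add: csum_0)
  next
    case (Suc j) then show ?case using mono[of j] by linarith
  qed
  show "valid (csum g)" using mono pos by (auto simp: valid_def)
  show "(\<lambda>k. (-1)^k * aa (csum g) k) sums x" using s by (simp add: term_eq)
qed

lemma g_from_csum:
  assumes e: "ob1_expansion x g"
  shows "g k = (if k = 0 then 0 else csum g (k-1) - (if k = 1 then 0 else csum g (k-2)))"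
proof -
  have g0: "g 0 = 0" using e unfolding ob1_expansion_def by auto
  show ?thesis
  proof (cases k)
    case 0 then show ?thesis using g0 by simp
  next
    case (Suc j)
    then show ?thesis
    proof (cases j)
      case 0 then show ?thesis using Suc by (simp add: csum_0)
    next
      case (Suc j') then show ?thesis using \<open>k = Suc j\<close> by (simp add: csum_Suc)
    qed
  qed
qed

lemma csum_gg:
  assumes x: "0 < x" "x < 1" "x \<notin> \<rat>"
  shows "csum (gg x) j = cs x j"
proof (induction j)
  case 0 then show ?case by (simp add: csum_0 gg_def)
next
  case (Suc j)
  have "cs x j < cs x (Suc j)" by (rule cs_mono[OF x])
  then show ?case using Suc by (simp add: csum_Suc gg_def)
qed

lemma gg_expansion:
  assumes x: "0 < x" "x < 1" "x \<notin> \<rat>"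
  shows "ob1_expansion x (gg x)"
proof -
  have "gg x k \<ge> 1" if "k \<ge> 1" for k
  proof (cases "k = 1")
    case True then show ?thesis using cs_pos[OF x, of 0] by (simp add: gg_def)
  next
    case False
    define j where "j = k - 2"
    have k: "k = Suc (Suc j)" unfolding j_def using that False by arith
    have "cs x j < cs x (Suc j)" by (rule cs_mono[OF x])
    then show ?thesis using k by (simp add: gg_def)
  qed
  moreover have "(\<lambda>k. ob1_term (gg x) (Suc k)) sums x"
  proof -
    have "csum (gg x) = cs x" using csum_gg[OF x] by (intro ext)
    then show ?thesis using cs_sums[OF x] by (simp add: term_eq)
  qed
  ultimately show ?thesis unfolding ob1_expansion_def by (simp add: gg_def)
qed

lemma symbols_eq:
  assumes x: "0 < x" "x < 1" "x \<notin> \<rat>"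
  shows "ob1_symbols x = gg x"
  unfolding ob1_symbols_def
proof (rule the_equality)
  show "ob1_expansion x (gg x)" by (rule gg_expansion[OF x])
next
  fix g assume e: "ob1_expansion x g"
  have c: "csum g j = cs x j" for j
    using uniq_digits[OF exp_props[OF e]] .
  show "g = gg x"
  proof
    fix k show "g k = gg x k" using g_from_csum[OF e, of k] by (simp add: c gg_def)
  qed
qed



definition qn :: "nat \<Rightarrow> real \<Rightarrow> nat" where "qn q r = nat \<lfloor>(real q + 1) / r\<rfloor>"
definition rn :: "nat \<Rightarrow> real \<Rightarrow> real" where
  "rn q r = (real (qn q r) + 1) * (1 - real (qn q r) * r / (real q + 1))"

fun hit :: "nat \<Rightarrow> nat \<Rightarrow> nat \<Rightarrow> real \<Rightarrow> bool" where
  "hit i 0 q r = (qn q r = q + i)"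
| "hit i (Suc k) q r = hit i k (qn q r) (rn q r)"

lemma qn_meas[measurable]: "qn q \<in> borel \<rightarrow>\<^sub>M count_space UNIV"
  unfolding qn_def by measurable

lemma rn_meas[measurable]: "rn q \<in> borel_measurable borel"
  unfolding rn_def by measurable

lemma hit_meas[measurable]: "Measurable.pred borel (hit i k q)"
proof (induction k arbitrary: q)
  case 0 then show ?case by simp
next
  case (Suc k)
  have "(\<lambda>r. hit i k m (rn q r)) \<in> borel \<rightarrow>\<^sub>M count_space UNIV" for m
    by (rule measurable_compose[OF rn_meas Suc.IH])
  then have "(\<lambda>r. hit i k (qn q r) (rn q r)) \<in> borel \<rightarrow>\<^sub>M count_space UNIV"
    by (rule measurable_compose_countable[OF _ qn_meas])
  then show ?case by simp
qed

lemma qn_nxt: "qn q r = nxt (r / (real q + 1))"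
  unfolding qn_def nxt_def by simp

lemma rn_zs: "rn q r / (real (qn q r) + 1) = 1 - real (nxt (r / (real q + 1))) * (r / (real q + 1))"
proof -
  have "real (qn q r) + 1 > 0" by simp
  then show ?thesis unfolding rn_def qn_nxt[symmetric] by simp
qed

lemma hit_cs:
  "hit i k q r \<longleftrightarrow> cs (r / (real q + 1)) k = (if k = 0 then q else cs (r / (real q + 1)) (k-1)) + i"
proof (induction k arbitrary: q r)
  case 0 then show ?case by (simp add: cs_def qn_nxt)
next
  case (Suc k)
  let ?z = "r / (real q + 1)"
  have cs_shift: "cs (rn q r / (real (qn q r) + 1)) j = cs ?z (Suc j)" for j
    unfolding rn_zs cs_def by (simp only: zs_Suc')
  have "hit i (Suc k) q r \<longleftrightarrow> hit i k (qn q r) (rn q r)" by simp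
  also have "\<dots> \<longleftrightarrow> cs (rn q r / (real (qn q r) + 1)) k =
      (if k = 0 then qn q r else cs (rn q r / (real (qn q r) + 1)) (k-1)) + i"
    by (rule Suc.IH)
  also have "\<dots> \<longleftrightarrow> cs ?z (Suc k) = (if Suc k = 0 then q else cs ?z (Suc k - 1)) + i"
  proof (cases k)
    case 0
    have e0: "qn q r = cs ?z 0" by (simp add: qn_nxt cs_def)
    have e1: "cs (rn q r / (real (qn q r) + 1)) 0 = cs ?z 1" by (simp only: cs_shift One_nat_def)
    show ?thesis unfolding 0 e1 by (simp add: e0)
  next
    case (Suc k') then show ?thesis by (simp add: cs_shift)
  qed
  finally show ?case .
qed

lemma gg_hit:
  assumes x: "0 < x" "x < 1" "x \<notin> \<rat>"
  shows "gg x (Suc k) = i \<longleftrightarrow> hit i k 0 x"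
proof -
  have le: "(if k = 0 then 0 else cs x (k-1)) \<le> cs x k"
  proof (cases k)
    case (Suc k') then show ?thesis using cs_mono[OF x, of k'] by simp
  qed simp
  have "hit i k 0 x \<longleftrightarrow> cs x k = (if k = 0 then 0 else cs x (k-1)) + i"
    using hit_cs[of i k 0 x] by simp
  moreover have "gg x (Suc k) = cs x k - (if k = 0 then 0 else cs x (k-1))"
    by (simp add: gg_def)
  ultimately show ?thesis using le by auto
qed



lemma aff_alg:
  fixes Q M x :: real assumes Q: "Q > 0" and M: "M > 0"
  shows "(M + 1) * (1 - M * (Q / M + (- (Q / (M * (M + 1)))) * x) / Q) = x"
proof -
  have MM0: "M * (M + 1) > 0" "M + M * M > 0" using M by (auto intro!: add_pos_pos mult_pos_pos)
  then have MM: "M * (M + 1) \<noteq> 0" "M + M * M \<noteq> 0" "M + 1 \<noteq> 0" "M \<noteq> 0" "Q \<noteq> 0" using M Q by auto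
  have "M * (Q / M + (- (Q / (M * (M + 1)))) * x) = M * (Q / M) - M * (Q / (M * (M + 1))) * x"
    by (simp add: algebra_simps)
  also have "M * (Q / M) = Q" using MM by simp
  also have "M * (Q / (M * (M + 1))) = Q / (M + 1)" using MM by (simp add: field_simps)
  finally have e: "M * (Q / M + (- (Q / (M * (M + 1)))) * x) = Q - Q / (M + 1) * x" .
  have "Q - Q / (M + 1) * x = Q * (1 - x / (M + 1))" by (simp add: right_diff_distrib)
  then have "(Q - Q / (M + 1) * x) / Q = 1 - x / (M + 1)" using MM by simp
  then have "M * (Q / M + (- (Q / (M * (M + 1)))) * x) / Q = 1 - x / (M + 1)" unfolding e .
  moreover have "M + 1 \<noteq> 0" using M by simp
  ultimately show ?thesis by simp
qed

lemma aff_int: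
  fixes Q M x :: real assumes Q: "Q > 0" and M: "M > 0"
  shows "(Q / M + (- (Q / (M * (M + 1)))) * x \<in> {Q / (M + 1) .. Q / M}) \<longleftrightarrow> x \<in> {0..1}"
proof -
  define k where "k = Q / (M * (M + 1))"
  have k: "k > 0" unfolding k_def using Q M by simp
  have MM0: "M * (M + 1) > 0" "M + M * M > 0" using M by (auto intro!: add_pos_pos mult_pos_pos)
  then have MM: "M * (M + 1) \<noteq> 0" "M + M * M \<noteq> 0" "M + 1 \<noteq> 0" "M \<noteq> 0" "Q \<noteq> 0" using M Q by auto
  have lo: "Q / (M + 1) = Q / M - k" unfolding k_def using M MM by (simp add: field_simps)
  have "Q / M + (- k) * x \<le> Q / M \<longleftrightarrow> 0 \<le> k * x" by simp
  also have "\<dots> \<longleftrightarrow> 0 \<le> x" using k by (simp add: zero_le_mult_iff)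
  finally have a: "Q / M + (- k) * x \<le> Q / M \<longleftrightarrow> 0 \<le> x" .
  have "Q / M - k \<le> Q / M + (- k) * x \<longleftrightarrow> k * x \<le> k * 1" by simp
  also have "\<dots> \<longleftrightarrow> x \<le> 1" using k by (rule mult_le_cancel_left_pos)
  finally have b: "Q / M - k \<le> Q / M + (- k) * x \<longleftrightarrow> x \<le> 1" .
  show ?thesis unfolding k_def[symmetric] lo using a b by auto
qed

lemma decomp:
  fixes h :: "nat \<Rightarrow> real \<Rightarrow> bool" and q :: nat
  assumes hm[measurable]: "\<And>m. Measurable.pred borel (h m)"
  shows "(\<integral>\<^sup>+ r. indicator {0..1} r * indicator {r. h (qn q r) (rn q r)} r \<partial>lborel)
     \<le> (\<Sum>n. ennreal ((real q + 1) / (real (Suc q + n) * (real (Suc q + n) + 1))) *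
            (\<integral>\<^sup>+ s. indicator {0..1} s * indicator {s. h (Suc q + n) s} s \<partial>lborel))"
proof -
  define aff where "aff m r = (real m + 1) * (1 - real m * r / (real q + 1))" for m r
  define G where "G n r = (indicator {(real q + 1) / (real (Suc q + n) + 1) .. (real q + 1) / real (Suc q + n)} r *
       indicator {s. h (Suc q + n) s} (aff (Suc q + n) r) :: ennreal)" for n r
  have Gm[measurable]: "G n \<in> borel_measurable borel" for n
    unfolding G_def aff_def by measurable
  have pw: "indicator {0..1} r * indicator {r. h (qn q r) (rn q r)} r \<le> indicator {0} r + (\<Sum>n. G n r)"
    for r :: real
  proof (cases "0 < r \<and> r \<le> 1")
    case False
    then consider "r = 0" | "r \<notin> {0..1}" by force
    then show ?thesis
    proof cases
      case 1
      have "indicator {0..1} r * indicator {r. h (qn q r) (rn q r)} r \<le> (1::ennreal)"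
        by (simp add: indicator_def)
      also have "\<dots> \<le> indicator {0} r + (\<Sum>n. G n r)" using 1 by simp
      finally show ?thesis .
    next
      case 2 then show ?thesis by simp
    qed
  next
    case True
    then have r: "0 < r" "r \<le> 1" by auto
    define m0 where "m0 = qn q r"
    have fl: "real_of_int \<lfloor>(real q + 1) / r\<rfloor> \<le> (real q + 1) / r"
             "(real q + 1) / r < real_of_int \<lfloor>(real q + 1) / r\<rfloor> + 1" by linarith+
    have "(real q + 1) * r \<le> (real q + 1) * 1" by (rule mult_left_mono) (use r in auto)
    then have big: "(real q + 1) / r \<ge> real q + 1" using r by (simp add: le_divide_eq)
    have fl0: "\<lfloor>(real q + 1) / r\<rfloor> \<ge> int q + 1" using big by linarith
    have m0r: "real m0 = real_of_int \<lfloor>(real q + 1) / r\<rfloor>" unfolding m0_def qn_def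
      by (rule of_nat_nat) (use fl0 in linarith)
    have m0q: "m0 \<ge> Suc q" using m0r fl0 by linarith
    define n0 where "n0 = m0 - Suc q"
    have m0n: "Suc q + n0 = m0" unfolding n0_def using m0q by simp
    have mpos: "real m0 > 0" using m0q by simp
    have i1: "real m0 \<le> (real q + 1) / r" using fl m0r by linarith
    have i2: "(real q + 1) / r < real m0 + 1" using fl m0r by linarith
    have ri1: "r \<le> (real q + 1) / real m0" using i1 r mpos by (simp add: field_simps)
    have ri2: "(real q + 1) / (real m0 + 1) \<le> r"
    proof -
      have "real q + 1 < (real m0 + 1) * r" using i2 r by (simp add: field_simps)
      then show ?thesis by (simp add: field_simps add_pos_nonneg)
    qed
    have affr: "aff m0 r = rn q r" unfolding aff_def rn_def m0_def ..
    have "indicator {0..1} r * indicator {r. h (qn q r) (rn q r)} r = G n0 r"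
      unfolding G_def m0n using r ri1 ri2 affr by (simp add: m0_def indicator_def)
    also have "\<dots> = (\<Sum>n\<in>{n0}. G n r)" by simp
    also have "\<dots> \<le> (\<Sum>n. G n r)" by (rule sum_le_suminf) auto
    also have "\<dots> \<le> indicator {0} r + (\<Sum>n. G n r)" by simp
    finally show ?thesis .
  qed
  have "(\<integral>\<^sup>+ r. indicator {0..1} r * indicator {r. h (qn q r) (rn q r)} r \<partial>lborel)
      \<le> (\<integral>\<^sup>+ r. indicator {0} r + (\<Sum>n. G n r) \<partial>lborel)"
    by (rule nn_integral_mono) (rule pw)
  also have "\<dots> = (\<integral>\<^sup>+ r. indicator {0::real} r \<partial>lborel) + (\<integral>\<^sup>+ r. (\<Sum>n. G n r) \<partial>lborel)"
  proof -
    have m1: "(\<lambda>r. \<Sum>n. G n r) \<in> borel_measurable lborel" by measurable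
    have m2: "(indicator {0::real} :: real \<Rightarrow> ennreal) \<in> borel_measurable lborel" by measurable
    show ?thesis by (rule nn_integral_add[OF m2 m1])
  qed
  also have "\<dots> = (\<Sum>n. \<integral>\<^sup>+ r. G n r \<partial>lborel)"
    by (simp add: nn_integral_suminf)
  also have "\<dots> = (\<Sum>n. ennreal ((real q + 1) / (real (Suc q + n) * (real (Suc q + n) + 1))) *
            (\<integral>\<^sup>+ s. indicator {0..1} s * indicator {s. h (Suc q + n) s} s \<partial>lborel))"
  proof (rule suminf_cong)
    fix n
    define m where "m = Suc q + n"
    define c where "c = - ((real q + 1) / (real m * (real m + 1)))"
    define t where "t = (real q + 1) / real m"
    have mp: "real m > 0" unfolding m_def by simp
    have qp: "real q + 1 > 0" by simp
    have c0: "c \<noteq> 0" unfolding c_def using mp qp by simp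
    have absc: "\<bar>c\<bar> = (real q + 1) / (real m * (real m + 1))" unfolding c_def using mp by simp
    have eqp: "G n (t + c * x) = indicator {0..1} x * indicator {s. h m s} x" for x
    proof -
      have "aff m (t + c * x) = x" unfolding aff_def t_def c_def by (rule aff_alg[OF qp mp])
      moreover have "(t + c * x \<in> {(real q + 1) / (real m + 1) .. (real q + 1) / real m}) \<longleftrightarrow> x \<in> {0..1}"
        unfolding t_def c_def by (rule aff_int[OF qp mp])
      ultimately show ?thesis unfolding G_def m_def[symmetric] by (simp add: indicator_def)
    qed
    have "(\<integral>\<^sup>+ r. G n r \<partial>lborel) = \<bar>c\<bar> * (\<integral>\<^sup>+ x. G n (t + c * x) \<partial>lborel)"
      by (rule nn_integral_real_affine[OF Gm c0])
    also have "\<dots> = ennreal ((real q + 1) / (real m * (real m + 1))) *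
            (\<integral>\<^sup>+ s. indicator {0..1} s * indicator {s. h m s} s \<partial>lborel)"
      unfolding eqp absc ..
    finally show "(\<integral>\<^sup>+ r. G n r \<partial>lborel) = ennreal ((real q + 1) / (real (Suc q + n) * (real (Suc q + n) + 1))) *
            (\<integral>\<^sup>+ s. indicator {0..1} s * indicator {s. h (Suc q + n) s} s \<partial>lborel)"
      unfolding m_def .
  qed
  finally show ?thesis .
qed



definition FF :: "nat \<Rightarrow> nat \<Rightarrow> nat \<Rightarrow> ennreal" where
  "FF i k q = (\<integral>\<^sup>+ r. indicator {0..1} r * indicator {r. hit i k q r} r \<partial>lborel)"

definition ac :: "nat \<Rightarrow> nat \<Rightarrow> real" where
  "ac q n = (real q + 1) / (real (Suc q + n) * (real (Suc q + n) + 1))"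

lemma ac_nonneg: "ac q n \<ge> 0" unfolding ac_def by simp

lemma FF_Suc: "FF i (Suc k) q \<le> (\<Sum>n. ennreal (ac q n) * FF i k (Suc q + n))"
proof -
  have eq: "{r. hit i (Suc k) q r} = {r. hit i k (qn q r) (rn q r)}" by simp
  show ?thesis unfolding FF_def ac_def eq by (rule decomp) (rule hit_meas)
qed

lemma FF_0: "FF i 0 q \<le> (\<Sum>n. ennreal (ac q n) * (if Suc q + n = q + i then 1 else 0))"
proof -
  have "FF i 0 q \<le> (\<Sum>n. ennreal (ac q n) *
      (\<integral>\<^sup>+ (s::real). indicator {0..1} s * indicator {s. Suc q + n = q + i} s \<partial>lborel))"
  proof -
    have eq: "{r. hit i 0 q r} = {r. qn q r = q + i}" by simp
    show ?thesis unfolding FF_def ac_def eq using decomp[of "\<lambda>m s. m = q + i" q] by simp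
  qed
  also have "\<dots> = (\<Sum>n. ennreal (ac q n) * (if Suc q + n = q + i then 1 else 0))"
  proof (rule suminf_cong)
    fix n
    show "ennreal (ac q n) * (\<integral>\<^sup>+ (s::real). indicator {0..1} s * indicator {s. Suc q + n = q + i} s \<partial>lborel) =
          ennreal (ac q n) * (if Suc q + n = q + i then 1 else 0)"
    proof (cases "Suc q + n = q + i")
      case True
      have "(\<integral>\<^sup>+ (s::real). indicator {0..1} s * indicator {s. Suc q + n = q + i} s \<partial>lborel)
          = (\<integral>\<^sup>+ s. indicator {0..1::real} s \<partial>lborel)" using True by simp
      also have "\<dots> = 1" by simp
      finally show ?thesis using True by simp
    qed simp
  qed
  finally show ?thesis .
qed

lemma base_bound:
  assumes i: "i \<ge> 1"
  shows "FF i 0 q \<le> ennreal (1 / (real q + 1))"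
proof -
  have "(\<Sum>n. ennreal (ac q n) * (if Suc q + n = q + i then 1 else 0)) =
        (\<Sum>n\<in>{i - 1}. ennreal (ac q n) * (if Suc q + n = q + i then 1 else 0))"
    by (rule suminf_finite) auto
  also have "\<dots> = ennreal (ac q (i - 1))" using i by simp
  also have "\<dots> \<le> ennreal (1 / (real q + 1))"
  proof (rule ennreal_leI)
    define m where "m = real (Suc q + (i - 1))"
    have m: "m \<ge> real q + 1" unfolding m_def by simp
    have "(real q + 1) * (real q + 1) \<le> m * (m + 1)" using m by (intro mult_mono) auto
    moreover have "0 < m * (m + 1) * ((real q + 1) * (real q + 1))" using m
      by (intro mult_pos_pos) auto
    ultimately have "(real q + 1) / (m * (m + 1)) \<le> (real q + 1) / ((real q + 1) * (real q + 1))"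
      by (intro divide_left_mono) auto
    also have "\<dots> = 1 / (real q + 1)" by simp
    finally show "ac q (i - 1) \<le> 1 / (real q + 1)" unfolding ac_def m_def .
  qed
  finally show ?thesis using FF_0[of i q] by simp
qed

lemma ineq0:
  fixes a b :: real assumes a: "a > 0" and b: "b = a + 1"
  shows "1 / (a * b^2) \<le> (1/2) * (1 / a^2 - 1 / b^2)"
proof -
  have bp: "b > 0" using a b by simp
  define D where "D = a^2 * b^2"
  have D: "D > 0" unfolding D_def using a bp by simp
  have e1: "1 / a^2 - 1 / b^2 = (b^2 - a^2) / D" unfolding D_def using a bp by (simp add: field_simps)
  have e2: "1 / (a * b^2) = a / D" unfolding D_def using a bp by (simp add: field_simps power2_eq_square)
  have e3: "b^2 - a^2 = 2 * a + 1" unfolding b by (simp add: power2_eq_square algebra_simps)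
  have "a / D \<le> (a + 1/2) / D" using D by (intro divide_right_mono) auto
  also have "(a + 1/2) / D = (1/2) * ((2 * a + 1) / D)" by (simp add: field_simps)
  finally show ?thesis unfolding e1 e2 e3 .
qed

lemma ineq1:
  fixes m :: real assumes m: "m > 0"
  shows "1 / (m * (m + 1)^2) \<le> (1/2) * (1 / m^2 - 1 / (m + 1)^2)"
  by (rule ineq0[OF m refl])

lemma step_term:
  fixes m Q :: real assumes m: "m > 0" and Q: "Q > 0"
  shows "Q / (m * (m + 1)) * (1 / (2^k * (m + 1))) \<le> (Q / 2^Suc k) / m^2 - (Q / 2^Suc k) / (m + 1)^2"
proof -
  have "Q / (m * (m + 1)) * (1 / (2^k * (m + 1))) = (Q / 2^k) * (1 / (m * (m + 1)^2))"
    by (simp add: power2_eq_square)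
  also have "\<dots> \<le> (Q / 2^k) * ((1/2) * (1 / m^2 - 1 / (m + 1)^2))"
    by (rule mult_left_mono[OF ineq1[OF m]]) (use Q in simp)
  also have "\<dots> = (Q / 2^Suc k) / m^2 - (Q / 2^Suc k) / (m + 1)^2"
    by (simp add: field_simps)
  finally show ?thesis .
qed

lemma FF_bound:
  assumes i: "i \<ge> 1"
  shows "FF i k q \<le> ennreal (1 / (2^k * (real q + 1)))"
proof (induction k arbitrary: q)
  case 0 then show ?case using base_bound[OF i] by simp
next
  case (Suc k)
  define C where "C = (real q + 1) / 2^Suc k"
  define f where "f n = C / (real (Suc q + n))^2" for n
  have Cp: "C > 0" unfolding C_def by simp
  have tm: "ac q n * (1 / (2^k * (real (Suc q + n) + 1))) \<le> f n - f (Suc n)" for n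
  proof -
    have e: "real (Suc q + Suc n) = real (Suc q + n) + 1" by simp
    show ?thesis unfolding ac_def f_def e C_def
      by (rule step_term) auto
  qed
  have flim: "f \<longlonglongrightarrow> 0"
  proof (rule tendsto_sandwich[of "\<lambda>_. 0" f sequentially "\<lambda>n. C / real n"])
    show "eventually (\<lambda>n. 0 \<le> f n) sequentially" unfolding f_def using Cp by simp
    have "f n \<le> C / real n" if "n \<ge> 1" for n
    proof -
      have "real n \<le> (real (Suc q + n))^2"
      proof -
        have "real n \<le> real (Suc q + n)" by simp
        also have "\<dots> \<le> (real (Suc q + n))^2" by (simp add: power2_eq_square)
        finally show ?thesis .
      qed
      then show ?thesis unfolding f_def using Cp that by (intro divide_left_mono) auto
    qed
    then show "eventually (\<lambda>n. f n \<le> C / real n) sequentially"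
      unfolding eventually_sequentially by blast
    show "(\<lambda>n. C / real n) \<longlonglongrightarrow> 0" by (rule lim_const_over_n)
  qed simp
  have tel: "(\<lambda>n. f n - f (Suc n)) sums (f 0 - 0)" by (rule telescope_sums'[OF flim])
  have dnn: "f n - f (Suc n) \<ge> 0" for n
    using tm[of n] ac_nonneg[of q n] by (smt (verit) mult_nonneg_nonneg divide_nonneg_nonneg of_nat_0_le_iff zero_le_power)
  have "FF i (Suc k) q \<le> (\<Sum>n. ennreal (ac q n) * FF i k (Suc q + n))" by (rule FF_Suc)
  also have "\<dots> \<le> (\<Sum>n. ennreal (ac q n) * ennreal (1 / (2^k * (real (Suc q + n) + 1))))"
    by (intro suminf_le summableI mult_left_mono Suc.IH) auto
  also have "\<dots> = (\<Sum>n. ennreal (ac q n * (1 / (2^k * (real (Suc q + n) + 1)))))"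
    by (rule suminf_cong, rule ennreal_mult'[symmetric, OF ac_nonneg])
  also have "\<dots> \<le> (\<Sum>n. ennreal (f n - f (Suc n)))"
    by (intro suminf_le summableI ennreal_leI tm)
  also have "\<dots> = ennreal (\<Sum>n. f n - f (Suc n))"
    by (rule suminf_ennreal2[OF dnn sums_summable[OF tel]])
  also have "(\<Sum>n. f n - f (Suc n)) = f 0" using tel sums_unique by fastforce
  also have "f 0 = 1 / (2^Suc k * (real q + 1))"
  proof -
    define Q where "Q = real q + 1"
    define A where "A = (2::real)^Suc k"
    have Q: "Q \<noteq> 0" "Q > 0" unfolding Q_def by linarith+
    have A: "A > 0" unfolding A_def by simp
    have r0: "real (Suc q + 0) = Q" unfolding Q_def by simp
    have c: "C = Q / A" unfolding C_def Q_def A_def ..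
    have "f 0 = (Q / A) / (Q * Q)" unfolding f_def r0 c power2_eq_square ..
    also have "\<dots> = 1 / (A * Q)" using Q A by (simp add: field_simps)
    finally show ?thesis unfolding Q_def A_def .
  qed
  finally show ?case .
qed



lemma AE_finite_hits:
  assumes i: "i \<ge> 1"
  shows "AE x in lborel. x \<in> {0<..<1} \<longrightarrow> finite {n. hit i n 0 x}"
proof -
  define A where "A n = {0..1::real} \<inter> {r. hit i n 0 r}" for n
  have Am[measurable]: "A n \<in> sets lborel" for n
    unfolding A_def by measurable
  have em: "emeasure lborel (A n) = FF i n 0" for n
    unfolding FF_def A_def by (simp add: indicator_inter_arith[symmetric])
  have emb: "emeasure lborel (A n) \<le> ennreal ((1/2)^n)" for n
    using FF_bound[OF i, of n 0] em by (simp add: power_one_over)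
  have fin: "emeasure lborel (A n) < \<infinity>" for n
    using emb[of n] by (simp add: le_less_trans)
  have mb: "measure lborel (A n) \<le> (1/2)^n" for n
  proof -
    have "ennreal (measure lborel (A n)) \<le> ennreal ((1/2)^n)"
      using emb[of n] fin[of n] by (simp add: emeasure_eq_ennreal_measure)
    then show ?thesis by (simp add: ennreal_le_iff)
  qed
  have sm: "summable (\<lambda>n. measure lborel (A n))"
    by (rule summable_comparison_test'[OF summable_geometric[of "1/2"], of 0]) (use mb in auto)
  have "AE x in lborel. eventually (\<lambda>n. x \<in> space lborel - A n) sequentially"
    by (rule borel_cantelli_AE1[OF Am fin sm])
  then show ?thesis
  proof (rule AE_mp, intro AE_I2 impI)
    fix x assume ev: "eventually (\<lambda>n. x \<in> space lborel - A n) sequentially" and x: "x \<in> {0<..<1}"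
    then obtain N where N: "\<And>n. n \<ge> N \<Longrightarrow> x \<notin> A n" unfolding eventually_sequentially by auto
    have "{n. hit i n 0 x} \<subseteq> {..<N}"
    proof
      fix n assume "n \<in> {n. hit i n 0 x}"
      then have "x \<in> A n" using x unfolding A_def by auto
      then show "n \<in> {..<N}" using N by (meson lessThan_iff not_le)
    qed
    then show "finite {n. hit i n 0 x}" by (rule finite_subset) simp
  qed
qed

theorem theorem6:
  shows "AE x in lborel. x \<in> {0<..<1} \<and> x \<notin> \<rat> \<longrightarrow>
           (\<forall>i::nat. i \<ge> 1 \<longrightarrow>
              limsup (\<lambda>n. ereal (real (ob1_count i x n))) < \<infinity>)"
proof -
  have "\<forall>i. AE x in lborel. (i \<ge> 1 \<longrightarrow> x \<in> {0<..<1} \<longrightarrow> finite {n. hit i n 0 x})"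
  proof
    fix i :: nat
    show "AE x in lborel. (i \<ge> 1 \<longrightarrow> x \<in> {0<..<1} \<longrightarrow> finite {n. hit i n 0 x})"
      by (cases "i \<ge> 1") (use AE_finite_hits in auto)
  qed
  then have "AE x in lborel. \<forall>i. (i \<ge> 1 \<longrightarrow> x \<in> {0<..<1} \<longrightarrow> finite {n. hit i n 0 x})"
    by (rule AE_all_countable[THEN iffD2])
  then show ?thesis
  proof (rule AE_mp, intro AE_I2 impI allI)
    fix x :: real and i :: nat
    assume H: "\<forall>i. (i \<ge> 1 \<longrightarrow> x \<in> {0<..<1} \<longrightarrow> finite {n. hit i n 0 x})"
      and x: "x \<in> {0<..<1} \<and> x \<notin> \<rat>" and i: "i \<ge> 1"
    have x3: "0 < x" "x < 1" "x \<notin> \<rat>" using x by auto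
    define S where "S = {n. hit i n 0 x}"
    have S: "finite S" using H i x unfolding S_def by auto
    have bound: "ob1_count i x n \<le> card (Suc ` S)" for n
    proof -
      have "{k \<in> {1..n}. ob1_symbols x k = i} \<subseteq> Suc ` S"
      proof
        fix k assume k: "k \<in> {k \<in> {1..n}. ob1_symbols x k = i}"
        then obtain j where j: "k = Suc j" by (cases k) auto
        have "gg x (Suc j) = i" using k j symbols_eq[OF x3] by simp
        then have "hit i j 0 x" using gg_hit[OF x3] by simp
        then show "k \<in> Suc ` S" using j unfolding S_def by auto
      qed
      then show ?thesis unfolding ob1_count_def by (intro card_mono) (use S in auto)
    qed
    have "limsup (\<lambda>n. ereal (real (ob1_count i x n))) \<le> ereal (real (card (Suc ` S)))"
      by (rule Limsup_bounded) (use bound in auto)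
    also have "\<dots> < \<infinity>" by simp
    finally show "limsup (\<lambda>n. ereal (real (ob1_count i x n))) < \<infinity>" .
  qed
qed


end
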